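(* Let $(K_i)_{i\in\mathbb N}$ be number fields with $K_i\subseteq K_{i+1}$ for all $i$ and $\overline{\mathbb Q}=\bigcup_{i}K_i$. For each $i\in\mathbb N$ and each non-Archimedean place $v$ of $K_i$ let $d_i(v)\in\mathbb Q$, and assume $d_i(v)=\sum_{w\in W_v(K_{i+1}/K_i)}d_{i+1}(w)$ for all $i$ and all non-Archimedean places $v$ of $K_i$. Then there exists a unique consistent map $c:\mathcal J\to\mathbb Q$ such that $c(K_i,v)=d_i(v)$ for all $i\in\mathbb N$ and all non-Archimedean places $v$ of $K_i$.
   Context: $\overline{\mathbb Q}$ is an algebraic closure of $\mathbb Q$. For number fields $K\subseteq L$ and a place $v$ of $K$, $W_v(L/K)$ denotes the set of places of $L$ dividing $v$. $\mathcal J$ is the set of pairs $(K,v)$ with $K\subseteq\overline{\mathbb Q}$ a number field and $v$ a non-Archimedean place of $K$. A map $c:\mathcal J\to\mathbb Q$ is consistent if $c(K,v)=\sum_{w\in W_v(L/K)}c(L,w)$ for all number fields $K$, all finite extensions $L/K$, and all non-Archimedean places $v$ of $K$. *)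

theory Defs
  imports Complex_Main "HOL-Computational_Algebra.Polynomial"
begin

definition Qbar :: "complex set" where
  "Qbar = {z. algebraic z}"

definition subfield_C :: "complex set \<Rightarrow> bool" where
  "subfield_C K \<longleftrightarrow> 0 \<in> K \<and> 1 \<in> K \<and>
     (\<forall>x\<in>K. \<forall>y\<in>K. x + y \<in> K \<and> x - y \<in> K \<and> x * y \<in> K) \<and>
     (\<forall>x\<in>K. x \<noteq> 0 \<longrightarrow> inverse x \<in> K)"

definition number_field :: "complex set \<Rightarrow> bool" where
  "number_field K \<longleftrightarrow> K \<subseteq> Qbar \<and> subfield_C K \<and>
     (\<exists>B. finite B \<and> B \<subseteq> K \<and>
        (\<forall>x\<in>K. \<exists>q. (\<forall>b\<in>B. q b \<in> \<rat>) \<and> x = (\<Sum>b\<in>B. q b * b)))"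

definition nonarch_abs :: "complex set \<Rightarrow> (complex \<Rightarrow> real) \<Rightarrow> bool" where
  "nonarch_abs K f \<longleftrightarrow> (\<forall>x. x \<notin> K \<longrightarrow> f x = 0) \<and>
     (\<forall>x\<in>K. f x \<ge> 0 \<and> (f x = 0 \<longleftrightarrow> x = 0)) \<and>
     (\<forall>x\<in>K. \<forall>y\<in>K. f (x * y) = f x * f y \<and> f (x + y) \<le> max (f x) (f y))"

definition nontrivial_abs :: "complex set \<Rightarrow> (complex \<Rightarrow> real) \<Rightarrow> bool" where
  "nontrivial_abs K f \<longleftrightarrow> (\<exists>x\<in>K. x \<noteq> 0 \<and> f x \<noteq> 1)"

definition equiv_abs :: "complex set \<Rightarrow> (complex \<Rightarrow> real) \<Rightarrow> (complex \<Rightarrow> real) \<Rightarrow> bool" where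
  "equiv_abs K f g \<longleftrightarrow> (\<exists>s>0. \<forall>x\<in>K. g x = f x powr s)"

definition nonarch_places :: "complex set \<Rightarrow> (complex \<Rightarrow> real) set set" where
  "nonarch_places K = {{g. nonarch_abs K g \<and> equiv_abs K f g} | f.
      nonarch_abs K f \<and> nontrivial_abs K f}"

definition restrict_abs :: "complex set \<Rightarrow> (complex \<Rightarrow> real) \<Rightarrow> (complex \<Rightarrow> real)" where
  "restrict_abs K f = (\<lambda>x. if x \<in> K then f x else 0)"

definition W :: "complex set \<Rightarrow> complex set \<Rightarrow> (complex \<Rightarrow> real) set \<Rightarrow> (complex \<Rightarrow> real) set set" where
  "W L K v = {w \<in> nonarch_places L. \<exists>f\<in>w. restrict_abs K f \<in> v}"

definition J :: "(complex set \<times> (complex \<Rightarrow> real) set) set" where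
  "J = {(K, v). number_field K \<and> v \<in> nonarch_places K}"

definition consistent :: "(complex set \<Rightarrow> (complex \<Rightarrow> real) set \<Rightarrow> rat) \<Rightarrow> bool" where
  "consistent c \<longleftrightarrow> (\<forall>K L v. number_field K \<longrightarrow> number_field L \<longrightarrow> K \<subseteq> L \<longrightarrow>
      v \<in> nonarch_places K \<longrightarrow> c K v = (\<Sum>w\<in>W L K v. c L w))"

end

theory Submission
  imports Defs
begin


definition cls :: "complex set \<Rightarrow> (complex \<Rightarrow> real) \<Rightarrow> (complex \<Rightarrow> real) set" where
  "cls K f = {g. nonarch_abs K g \<and> equiv_abs K f g}"

lemma na_out: "nonarch_abs K f \<Longrightarrow> x \<notin> K \<Longrightarrow> f x = 0"
  unfolding nonarch_abs_def by auto
lemma na_nonneg: "nonarch_abs K f \<Longrightarrow> f x \<ge> 0"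
  unfolding nonarch_abs_def by (cases "x \<in> K") auto
lemma na_zero_iff: "nonarch_abs K f \<Longrightarrow> x \<in> K \<Longrightarrow> f x = 0 \<longleftrightarrow> x = 0"
  unfolding nonarch_abs_def by auto
lemma na_mult: "nonarch_abs K f \<Longrightarrow> x \<in> K \<Longrightarrow> y \<in> K \<Longrightarrow> f (x * y) = f x * f y"
  unfolding nonarch_abs_def by auto
lemma na_add: "nonarch_abs K f \<Longrightarrow> x \<in> K \<Longrightarrow> y \<in> K \<Longrightarrow> f (x + y) \<le> max (f x) (f y)"
  unfolding nonarch_abs_def by auto

lemma eq_refl: "nonarch_abs K f \<Longrightarrow> equiv_abs K f f"
  unfolding equiv_abs_def by (intro exI[of _ 1]) (auto simp: na_nonneg)

lemma eq_sym: assumes "nonarch_abs K f" "equiv_abs K f g" shows "equiv_abs K g f"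
proof -
  obtain s where s: "s > 0" "\<forall>x\<in>K. g x = f x powr s" using assms(2) unfolding equiv_abs_def by auto
  show ?thesis unfolding equiv_abs_def
  proof (intro exI[of _ "1/s"] conjI ballI)
    fix x assume "x \<in> K"
    then show "f x = g x powr (1/s)" using s na_nonneg[OF assms(1), of x] by (simp add: powr_powr)
  qed (use s in auto)
qed

lemma eq_trans: assumes "equiv_abs K f g" "equiv_abs K g h" shows "equiv_abs K f h"
proof -
  obtain s where s: "s > 0" "\<forall>x\<in>K. g x = f x powr s" using assms(1) unfolding equiv_abs_def by auto
  obtain t where t: "t > 0" "\<forall>x\<in>K. h x = g x powr t" using assms(2) unfolding equiv_abs_def by auto
  show ?thesis unfolding equiv_abs_def
    by (intro exI[of _ "s*t"]) (use s t in \<open>auto simp: powr_powr\<close>)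
qed

lemma place_cls: assumes "v \<in> nonarch_places K"
  obtains f where "nonarch_abs K f" "nontrivial_abs K f" "v = cls K f"
  using assms unfolding nonarch_places_def cls_def by auto

lemma place_mem: "v \<in> nonarch_places K \<Longrightarrow> g \<in> v \<Longrightarrow> nonarch_abs K g"
  by (erule place_cls) (auto simp: cls_def)

lemma place_equiv: assumes "v \<in> nonarch_places K" "g \<in> v" "h \<in> v" shows "equiv_abs K g h"
proof -
  obtain f where f: "nonarch_abs K f" "v = cls K f" using assms(1) by (rule place_cls)
  have "equiv_abs K f g" "equiv_abs K f h" using f assms unfolding cls_def by auto
  then show ?thesis using eq_sym[OF f(1)] eq_trans by blast
qed

lemma place_closed: assumes "v \<in> nonarch_places K" "g \<in> v" "nonarch_abs K h" "equiv_abs K g h"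
  shows "h \<in> v"
proof -
  obtain f where f: "nonarch_abs K f" "v = cls K f" using assms(1) by (rule place_cls)
  have "equiv_abs K f g" using f assms unfolding cls_def by auto
  then have "equiv_abs K f h" using eq_trans assms(4) by blast
  then show ?thesis using f assms(3) unfolding cls_def by auto
qed

lemma place_ne: assumes "v \<in> nonarch_places K" obtains g where "g \<in> v"
proof -
  obtain f where f: "nonarch_abs K f" "v = cls K f" using assms(1) by (rule place_cls)
  then have "f \<in> v" using eq_refl unfolding cls_def by auto
  then show ?thesis using that by blast
qed

lemma place_eq: assumes "v \<in> nonarch_places K" "w \<in> nonarch_places K" "g \<in> v" "g \<in> w"
  shows "v = w"
proof -
  obtain f where f: "nonarch_abs K f" "v = cls K f" using assms(1) by (rule place_cls)
  obtain f' where f': "nonarch_abs K f'" "w = cls K f'" using assms(2) by (rule place_cls)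
  have "equiv_abs K f g" "equiv_abs K f' g" using f f' assms unfolding cls_def by auto
  have "nonarch_abs K g" using place_mem assms by blast
  have "equiv_abs K g f'" using eq_sym[OF f'(1)] \<open>equiv_abs K f' g\<close> by blast
  then have ff: "equiv_abs K f f'" using eq_trans \<open>equiv_abs K f g\<close> by blast
  then have "equiv_abs K f' f" using eq_sym f by blast
  show ?thesis unfolding f f' cls_def using ff \<open>equiv_abs K f' f\<close> eq_trans by blast
qed

lemma powr_eq_1: assumes "(x::real) > 0" "s > 0" "x powr s = 1" shows "x = 1"
proof -
  have "s * ln x = 0" using ln_powr[of x s] assms(3) by simp
  then have "ln x = 0" using assms by simp
  then show ?thesis using assms(1) by simp
qed

lemma place_nontriv: assumes "v \<in> nonarch_places K" "g \<in> v" shows "nontrivial_abs K g"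
proof -
  obtain f where f: "nonarch_abs K f" "nontrivial_abs K f" "v = cls K f" using assms(1) by (rule place_cls)
  obtain s where s: "s > 0" "\<forall>x\<in>K. g x = f x powr s" using f assms(2) unfolding cls_def equiv_abs_def by auto
  obtain x where x: "x \<in> K" "x \<noteq> 0" "f x \<noteq> 1" using f(2) unfolding nontrivial_abs_def by auto
  have "f x > 0" using na_nonneg[OF f(1), of x] na_zero_iff[OF f(1) x(1)] x by auto
  have "g x = f x powr s" using s x by auto
  then have "g x \<noteq> 1" using powr_eq_1[OF \<open>f x > 0\<close> \<open>s > 0\<close>] x(3) by auto
  then show ?thesis using x unfolding nontrivial_abs_def by auto
qed



lemma sf_0: "subfield_C K \<Longrightarrow> 0 \<in> K" unfolding subfield_C_def by auto
lemma sf_1: "subfield_C K \<Longrightarrow> 1 \<in> K" unfolding subfield_C_def by auto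
lemma sf_add: "subfield_C K \<Longrightarrow> x \<in> K \<Longrightarrow> y \<in> K \<Longrightarrow> x + y \<in> K" unfolding subfield_C_def by auto
lemma sf_diff: "subfield_C K \<Longrightarrow> x \<in> K \<Longrightarrow> y \<in> K \<Longrightarrow> x - y \<in> K" unfolding subfield_C_def by auto
lemma sf_mult: "subfield_C K \<Longrightarrow> x \<in> K \<Longrightarrow> y \<in> K \<Longrightarrow> x * y \<in> K" unfolding subfield_C_def by auto
lemma sf_inverse: "subfield_C K \<Longrightarrow> x \<in> K \<Longrightarrow> inverse x \<in> K"
  unfolding subfield_C_def by (cases "x = 0") auto
lemma sf_uminus: "subfield_C K \<Longrightarrow> x \<in> K \<Longrightarrow> - x \<in> K"
  using sf_diff[of K 0 x] sf_0 by auto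
lemma sf_power: "subfield_C K \<Longrightarrow> x \<in> K \<Longrightarrow> x ^ n \<in> K"
  by (induction n) (auto intro: sf_1 sf_mult)
lemma sf_sum: "subfield_C K \<Longrightarrow> (\<And>i. i \<in> I \<Longrightarrow> g i \<in> K) \<Longrightarrow> sum g I \<in> K"
  by (induction I rule: infinite_finite_induct) (auto intro: sf_0 sf_add)
lemma sf_of_nat: "subfield_C K \<Longrightarrow> of_nat n \<in> K"
  by (induction n) (auto intro: sf_0 sf_1 sf_add)
lemma sf_of_int: "subfield_C K \<Longrightarrow> of_int n \<in> K"
proof (cases "n \<ge> 0")
  case True
  assume "subfield_C K"
  then show ?thesis using True sf_of_nat[of K "nat n"] by simp
next
  case False
  assume "subfield_C K"
  then show ?thesis using False sf_of_nat[of K "nat (-n)"] sf_uminus[of K] by (metis of_int_minus of_int_of_nat_eq minus_minus nat_0_le neg_0_le_iff_le linorder_linear)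
qed
lemma sf_of_rat: assumes "subfield_C K" shows "of_rat r \<in> K"
proof -
  obtain a b where "r = Fract a b" "b > 0" by (cases r) auto
  then have "(of_rat r :: complex) = of_int a * inverse (of_int b)"
    by (simp add: of_rat_rat divide_inverse)
  then show ?thesis using assms sf_of_int sf_mult sf_inverse by metis
qed
lemma sf_Rats: "subfield_C K \<Longrightarrow> (q::complex) \<in> \<rat> \<Longrightarrow> q \<in> K"
  using sf_of_rat by (auto elim: Rats_cases)

lemma na_one: assumes "nonarch_abs K f" "subfield_C K" shows "f 1 = 1"
proof -
  have "f 1 = f 1 * f 1" using na_mult[OF assms(1), of 1 1] sf_1[OF assms(2)] by simp
  moreover have "f 1 \<noteq> 0" using na_zero_iff[OF assms(1) sf_1[OF assms(2)]] by simp
  ultimately show ?thesis by simp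
qed

lemma na_inverse: assumes "nonarch_abs K f" "subfield_C K" "x \<in> K"
  shows "f (inverse x) = inverse (f x)"
proof (cases "x = 0")
  case True then show ?thesis using na_zero_iff[OF assms(1) assms(3)] by simp
next
  case False
  have "f x * f (inverse x) = f 1" using na_mult[OF assms(1) assms(3) sf_inverse[OF assms(2,3)]] False by simp
  then have "f x * f (inverse x) = 1" using na_one[OF assms(1,2)] by simp
  then show ?thesis by (metis inverse_unique)
qed

lemma na_power: assumes "nonarch_abs K f" "subfield_C K" "x \<in> K" shows "f (x ^ n) = f x ^ n"
proof (induction n)
  case 0 then show ?case using na_one assms by simp
next
  case (Suc n)
  have "f (x * x ^ n) = f x * f (x ^ n)" using na_mult[OF assms(1) assms(3) sf_power[OF assms(2,3)]] .
  then show ?case using Suc by simp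
qed

lemma na_minus: assumes "nonarch_abs K f" "subfield_C K" "x \<in> K" shows "f (- x) = f x"
proof -
  have m1: "-1 \<in> K" using sf_uminus[OF assms(2) sf_1[OF assms(2)]] .
  have "f (-1) * f (-1) = 1" using na_mult[OF assms(1) m1 m1] na_one[OF assms(1,2)] by simp
  moreover have "f (-1) \<ge> 0" using na_nonneg[OF assms(1)] .
  ultimately have "f (-1) = 1" by (metis abs_of_nonneg abs_square_eq_1 power2_eq_square)
  then show ?thesis using na_mult[OF assms(1) m1 assms(3)] by simp
qed

lemma na_strict: assumes "nonarch_abs K f" "subfield_C K" "a \<in> K" "b \<in> K" "f b < f a"
  shows "f (a + b) = f a"
proof -
  have "f (a + b) \<le> max (f a) (f b)" using na_add assms by blast
  moreover have "f a \<le> max (f (a + b)) (f (- b))"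
    using na_add[OF assms(1) sf_add[OF assms(2,3,4)] sf_uminus[OF assms(2,4)]] by simp
  moreover have "f (-b) = f b" using na_minus assms by blast
  ultimately show ?thesis using assms(5) by linarith
qed

lemma na_sum_less: assumes "nonarch_abs K f" "subfield_C K" "finite I" "c > 0"
  "\<And>i. i \<in> I \<Longrightarrow> g i \<in> K" "\<And>i. i \<in> I \<Longrightarrow> f (g i) < c"
  shows "f (sum g I) < c"
  using assms(3,5,6)
proof (induction I rule: finite_induct)
  case empty then show ?case using na_zero_iff[OF assms(1) sf_0[OF assms(2)]] assms(4) by simp
next
  case (insert i I)
  have "f (g i + sum g I) \<le> max (f (g i)) (f (sum g I))"
    using na_add[OF assms(1), of "g i" "sum g I"] insert.prems sf_sum[OF assms(2), of I g] by simp
  moreover have "f (g i) < c" using insert.prems(2)[of i] by simp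
  moreover have "f (sum g I) < c" using insert by simp
  ultimately have "f (g i + sum g I) < c" by (metis max_less_iff_conj le_less_trans)
  then show ?case using insert by simp
qed

lemma restr_na: assumes "nonarch_abs L f" "subfield_C K" "K \<subseteq> L"
  shows "nonarch_abs K (restrict_abs K f)"
  using assms sf_add sf_mult unfolding nonarch_abs_def restrict_abs_def subset_iff
  by (auto simp del: max_def)

lemma restr_restr: "K \<subseteq> L \<Longrightarrow> restrict_abs K (restrict_abs L f) = restrict_abs K f"
  unfolding restrict_abs_def by (rule ext) auto
lemma restr_self: "nonarch_abs K f \<Longrightarrow> restrict_abs K f = f"
  unfolding restrict_abs_def by (auto simp: na_out)
lemma restr_equiv: "equiv_abs L f g \<Longrightarrow> K \<subseteq> L \<Longrightarrow> equiv_abs K (restrict_abs K f) (restrict_abs K g)"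
  unfolding equiv_abs_def restrict_abs_def by auto

lemma W_sub: "W L K v \<subseteq> nonarch_places L" unfolding W_def by auto

lemma W_self: assumes "v \<in> nonarch_places K" shows "W K K v = {v}"
proof
  show "W K K v \<subseteq> {v}"
  proof
    fix w assume "w \<in> W K K v"
    then obtain f where f: "w \<in> nonarch_places K" "f \<in> w" "restrict_abs K f \<in> v" unfolding W_def by auto
    then have "restrict_abs K f = f" using restr_self place_mem by blast
    then show "w \<in> {v}" using place_eq[OF assms f(1)] f by auto
  qed
next
  obtain g where g: "g \<in> v" using assms by (rule place_ne)
  then have "restrict_abs K g = g" using restr_self place_mem assms by blast
  then have "restrict_abs K g \<in> v" using g by simp
  then show "{v} \<subseteq> W K K v" using g assms unfolding W_def by blast
qed

lemma na_nontriv_restr: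
  assumes "nonarch_abs M f" "nontrivial_abs K (restrict_abs K f)" "K \<subseteq> L"
  shows "nontrivial_abs L (restrict_abs L f)"
  using assms unfolding nontrivial_abs_def restrict_abs_def by auto

lemma part_cover:
  assumes sK: "subfield_C K" and sL: "subfield_C L" and KL: "K \<subseteq> L" and LM: "L \<subseteq> M"
    and v: "v \<in> nonarch_places K" and u: "u \<in> W M K v"
  shows "\<exists>w\<in>W L K v. u \<in> W M L w"
proof -
  obtain f where f: "u \<in> nonarch_places M" "f \<in> u" "restrict_abs K f \<in> v" using u unfolding W_def by auto
  have naf: "nonarch_abs M f" using place_mem f by blast
  have naL: "nonarch_abs L (restrict_abs L f)" using restr_na[OF naf sL LM] .
  have "nontrivial_abs K (restrict_abs K f)" using place_nontriv v f by blast
  then have ntL: "nontrivial_abs L (restrict_abs L f)" using na_nontriv_restr[OF naf _ KL] by blast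
  define w where "w = cls L (restrict_abs L f)"
  have wp: "w \<in> nonarch_places L" using naL ntL unfolding w_def nonarch_places_def cls_def by blast
  have rw: "restrict_abs L f \<in> w" unfolding w_def cls_def using naL eq_refl by blast
  have "restrict_abs K (restrict_abs L f) \<in> v" using f(3) restr_restr[OF KL] by simp
  then have "w \<in> W L K v" using wp rw unfolding W_def by blast
  moreover have "u \<in> W M L w" using f rw unfolding W_def by blast
  ultimately show ?thesis by blast
qed

lemma part_sub:
  assumes KL: "K \<subseteq> L" and LM: "L \<subseteq> M" and sK: "subfield_C K" and sL: "subfield_C L"
    and v: "v \<in> nonarch_places K" and w: "w \<in> W L K v" and u: "u \<in> W M L w"
  shows "u \<in> W M K v"
proof -
  obtain f where f: "u \<in> nonarch_places M" "f \<in> u" "restrict_abs L f \<in> w" using u unfolding W_def by auto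
  obtain g where g: "w \<in> nonarch_places L" "g \<in> w" "restrict_abs K g \<in> v" using w unfolding W_def by auto
  have naf: "nonarch_abs M f" using place_mem f by blast
  have "equiv_abs L g (restrict_abs L f)" using place_equiv[OF g(1) g(2) f(3)] .
  then have "equiv_abs K (restrict_abs K g) (restrict_abs K (restrict_abs L f))" using restr_equiv KL by blast
  then have e: "equiv_abs K (restrict_abs K g) (restrict_abs K f)" using restr_restr[OF KL] by simp
  have "nonarch_abs K (restrict_abs K f)" using restr_na[OF naf sK] KL LM by blast
  then have "restrict_abs K f \<in> v" using place_closed[OF v g(3) _ e] by blast
  then show ?thesis using f unfolding W_def by blast
qed

lemma part_disj:
  assumes LM: "L \<subseteq> M" and sL: "subfield_C L"
    and w1: "w1 \<in> nonarch_places L" and w2: "w2 \<in> nonarch_places L"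
    and u1: "u \<in> W M L w1" and u2: "u \<in> W M L w2"
  shows "w1 = w2"
proof -
  obtain f1 where f1: "u \<in> nonarch_places M" "f1 \<in> u" "restrict_abs L f1 \<in> w1" using u1 unfolding W_def by auto
  obtain f2 where f2: "f2 \<in> u" "restrict_abs L f2 \<in> w2" using u2 unfolding W_def by auto
  have "equiv_abs M f2 f1" using place_equiv[OF f1(1) f2(1) f1(2)] .
  then have e: "equiv_abs L (restrict_abs L f2) (restrict_abs L f1)" using restr_equiv LM by blast
  have "nonarch_abs L (restrict_abs L f1)" using place_mem w1 f1 by blast
  then have "restrict_abs L f1 \<in> w2" using place_closed[OF w2 f2(2) _ e] by blast
  then show ?thesis using place_eq[OF w1 w2 f1(3)] by blast
qed



lemma na_pos: "nonarch_abs L h \<Longrightarrow> x \<in> L \<Longrightarrow> x \<noteq> 0 \<Longrightarrow> h x > 0"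
  using na_nonneg[of L h x] na_zero_iff[of L h x] by linarith

lemma ln_val1: assumes h: "nonarch_abs L h" and sL: "subfield_C L" and x: "x \<in> L" "x \<noteq> 0"
  and y: "y \<in> L" "y \<noteq> 0"
  shows "ln (h (x ^ k * inverse y ^ j)) = real k * ln (h x) - real j * ln (h y)"
proof -
  have hx: "h x > 0" and hy: "h y > 0" using na_pos h x y by auto
  have "h (x ^ k * inverse y ^ j) = h (x ^ k) * h (inverse y ^ j)"
    using na_mult[OF h sf_power[OF sL x(1)] sf_power[OF sL sf_inverse[OF sL y(1)]]] .
  also have "\<dots> = h x ^ k * inverse (h y) ^ j"
    using na_power[OF h sL x(1)] na_power[OF h sL sf_inverse[OF sL y(1)]] na_inverse[OF h sL y(1)] by simp
  finally show ?thesis using hx hy by (simp add: ln_mult ln_realpow ln_inverse)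
qed

lemma ln_val2: assumes h: "nonarch_abs L h" and sL: "subfield_C L" and x: "x \<in> L" "x \<noteq> 0"
  and y: "y \<in> L" "y \<noteq> 0"
  shows "ln (h (x ^ k * y ^ j)) = real k * ln (h x) + real j * ln (h y)"
proof -
  have hx: "h x > 0" and hy: "h y > 0" using na_pos h x y by auto
  have "h (x ^ k * y ^ j) = h (x ^ k) * h (y ^ j)"
    using na_mult[OF h sf_power[OF sL x(1)] sf_power[OF sL y(1)]] .
  also have "\<dots> = h x ^ k * h y ^ j"
    using na_power[OF h sL x(1)] na_power[OF h sL y(1)] by simp
  finally show ?thesis using hx hy by (simp add: ln_mult ln_realpow)
qed

lemma exists_z: assumes f: "nonarch_abs L f" and g: "nonarch_abs L g" and sL: "subfield_C L"
  and x: "x \<in> L" "x \<noteq> 0" and y: "y \<in> L" "y \<noteq> 0"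
  shows "\<exists>z\<in>L. z \<noteq> 0 \<and> ln (f z) = real k * ln (f x) - of_int m * ln (f y)
             \<and> ln (g z) = real k * ln (g x) - of_int m * ln (g y)"
proof (cases "m \<ge> 0")
  case True
  define z where "z = x ^ k * inverse y ^ nat m"
  have "z \<in> L" unfolding z_def using sL x y by (intro sf_mult sf_power sf_inverse) auto
  moreover have "z \<noteq> 0" unfolding z_def using x y by simp
  moreover have "real (nat m) = of_int m" using True by simp
  ultimately show ?thesis using ln_val1[OF f sL x y, of k "nat m"] ln_val1[OF g sL x y, of k "nat m"]
    unfolding z_def by metis
next
  case False
  define z where "z = x ^ k * y ^ nat (- m)"
  have "z \<in> L" unfolding z_def using sL x y by (intro sf_mult sf_power) auto
  moreover have "z \<noteq> 0" unfolding z_def using x y by simp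
  moreover have "real (nat (-m)) = - of_int m" using False by simp
  ultimately show ?thesis using ln_val2[OF f sL x y, of k "nat (-m)"] ln_val2[OF g sL x y, of k "nat (-m)"]
    unfolding z_def by (metis diff_conv_add_uminus mult_minus_left)
qed

lemma gt1_imp:
  assumes f: "nonarch_abs L f" and g: "nonarch_abs L g" and sL: "subfield_C L"
    and hyp: "\<forall>z\<in>L. f z < 1 \<longrightarrow> g z < 1"
    and z: "z \<in> L" "z \<noteq> 0" "f z > 1"
  shows "g z > 1"
proof -
  have iz: "inverse z \<in> L" using sf_inverse sL z by blast
  have "f (inverse z) < 1" using na_inverse[OF f sL z(1)] z(3) by (simp add: inverse_less_1_iff)
  then have "g (inverse z) < 1" using hyp iz by blast
  then have "inverse (g z) < 1" using na_inverse[OF g sL z(1)] by simp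
  moreover have "g z > 0" using na_pos g z by blast
  ultimately show ?thesis by (simp add: inverse_less_1_iff)
qed

lemma key_pair:
  assumes sL: "subfield_C L" and f: "nonarch_abs L f" and g: "nonarch_abs L g"
    and ntf: "nontrivial_abs L f" and hyp: "\<forall>z\<in>L. f z < 1 \<longrightarrow> g z < 1"
  shows "equiv_abs L f g"
proof -
  obtain x0 where x0: "x0 \<in> L" "x0 \<noteq> 0" "f x0 \<noteq> 1" using ntf unfolding nontrivial_abs_def by auto
  have fx0: "f x0 > 0" using na_pos f x0 by blast
  obtain y where y: "y \<in> L" "y \<noteq> 0" "f y > 1"
  proof (cases "f x0 > 1")
    case True then show ?thesis using that x0 by blast
  next
    case False
    then have "f x0 < 1" using x0(3) by simp
    then have "f (inverse x0) > 1" using na_inverse[OF f sL x0(1)] fx0 by (simp add: one_less_inverse_iff)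
    then show ?thesis using that[of "inverse x0"] sf_inverse[OF sL x0(1)] x0(2) by simp
  qed
  have gy: "g y > 1" using gt1_imp[OF f g sL hyp y] .
  define Fy where "Fy = ln (f y)"
  define Gy where "Gy = ln (g y)"
  have Fy: "Fy > 0" unfolding Fy_def using y by simp
  have Gy: "Gy > 0" unfolding Gy_def using gy by simp
  define s where "s = Gy / Fy"
  have s: "s > 0" unfolding s_def using Fy Gy by simp
  have main: "ln (g x) = s * ln (f x)" if x: "x \<in> L" "x \<noteq> 0" for x
  proof -
    define a where "a = ln (f x) / Fy"
    define b where "b = ln (g x) / Gy"
    have imp: "(a < r \<longrightarrow> b < r) \<and> (r < a \<longrightarrow> r < b)" if r: "r \<in> \<rat>" for r
    proof -
      obtain m k where mk: "k > 0" "r = of_int m / of_int k" using Rats_cases'[OF r] by metis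
      obtain z where z: "z \<in> L" "z \<noteq> 0"
        "ln (f z) = real (nat k) * ln (f x) - of_int m * ln (f y)"
        "ln (g z) = real (nat k) * ln (g x) - of_int m * ln (g y)"
        using exists_z[OF f g sL x y(1,2), of "nat k" m] by blast
      have kk: "real (nat k) = of_int k" using mk by simp
      have fz: "f z > 0" and gz: "g z > 0" using na_pos f g z by auto
      have kpos: "(of_int k :: real) > 0" using mk by simp
      have e1: "a < r \<longleftrightarrow> ln (f z) < 0"
      proof -
        have "a < r \<longleftrightarrow> ln (f x) / Fy < of_int m / of_int k" unfolding a_def mk by simp
        also have "\<dots> \<longleftrightarrow> ln (f x) * of_int k < of_int m * Fy" using Fy kpos by (simp add: field_simps)
        also have "\<dots> \<longleftrightarrow> ln (f z) < 0" using z(3) kk unfolding Fy_def by (simp add: algebra_simps, linarith)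
        finally show ?thesis .
      qed
      have e2: "r < a \<longleftrightarrow> ln (f z) > 0"
      proof -
        have "r < a \<longleftrightarrow> of_int m / of_int k < ln (f x) / Fy" unfolding a_def mk by simp
        also have "\<dots> \<longleftrightarrow> of_int m * Fy < ln (f x) * of_int k" using Fy kpos by (simp add: field_simps)
        also have "\<dots> \<longleftrightarrow> ln (f z) > 0" using z(3) kk unfolding Fy_def by (simp add: algebra_simps, linarith)
        finally show ?thesis .
      qed
      have e3: "b < r \<longleftrightarrow> ln (g z) < 0"
      proof -
        have "b < r \<longleftrightarrow> ln (g x) / Gy < of_int m / of_int k" unfolding b_def mk by simp
        also have "\<dots> \<longleftrightarrow> ln (g x) * of_int k < of_int m * Gy" using Gy kpos by (simp add: field_simps)
        also have "\<dots> \<longleftrightarrow> ln (g z) < 0" using z(4) kk unfolding Gy_def by (simp add: algebra_simps, linarith)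
        finally show ?thesis .
      qed
      have e4: "r < b \<longleftrightarrow> ln (g z) > 0"
      proof -
        have "r < b \<longleftrightarrow> of_int m / of_int k < ln (g x) / Gy" unfolding b_def mk by simp
        also have "\<dots> \<longleftrightarrow> of_int m * Gy < ln (g x) * of_int k" using Gy kpos by (simp add: field_simps)
        also have "\<dots> \<longleftrightarrow> ln (g z) > 0" using z(4) kk unfolding Gy_def by (simp add: algebra_simps, linarith)
        finally show ?thesis .
      qed
      have "f z < 1 \<longrightarrow> g z < 1" using hyp z by blast
      moreover have "f z > 1 \<longrightarrow> g z > 1" using gt1_imp[OF f g sL hyp z(1,2)] by blast
      ultimately show ?thesis using e1 e2 e3 e4 fz gz by simp
    qed
    have "a = b"
    proof (rule ccontr)
      assume "a \<noteq> b"
      then consider "a < b" | "b < a" by linarith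
      then show False
      proof cases
        case 1
        then obtain r where "r \<in> \<rat>" "a < r" "r < b" using Rats_dense_in_real by blast
        then show False using imp by force
      next
        case 2
        then obtain r where "r \<in> \<rat>" "b < r" "r < a" using Rats_dense_in_real by blast
        then show False using imp by force
      qed
    qed
    then show ?thesis unfolding a_def b_def s_def using Fy Gy by (simp add: field_simps)
  qed
  show ?thesis unfolding equiv_abs_def
  proof (intro exI[of _ s] conjI ballI)
    fix x assume x: "x \<in> L"
    show "g x = f x powr s"
    proof (cases "x = 0")
      case True then show ?thesis using na_zero_iff[OF f x] na_zero_iff[OF g x] by simp
    next
      case False
      have "f x > 0" "g x > 0" using na_pos f g x False by auto
      then show ?thesis using main[OF x False] by (metis exp_ln powr_def less_irrefl)
    qed
  qed (rule s)
qed

lemma sep2: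
  assumes sL: "subfield_C L" and f: "nonarch_abs L f" and g: "nonarch_abs L g"
    and ntf: "nontrivial_abs L f" and ntg: "nontrivial_abs L g" and ne: "\<not> equiv_abs L f g"
  shows "\<exists>x\<in>L. f x > 1 \<and> g x < 1"
proof -
  obtain z where z: "z \<in> L" "f z < 1" "g z \<ge> 1" using key_pair[OF sL f g ntf] ne by force
  have ne': "\<not> equiv_abs L g f" using ne eq_sym[OF g] by blast
  obtain z' where z': "z' \<in> L" "g z' < 1" "f z' \<ge> 1" using key_pair[OF sL g f ntg] ne' by force
  have z0: "z \<noteq> 0" using z na_zero_iff[OF g z(1)] by auto
  have fz: "f z > 0" using na_pos f z(1) z0 by blast
  have gz: "g z > 0" using na_pos g z(1) z0 by blast
  define x where "x = z' * inverse z"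
  have xL: "x \<in> L" unfolding x_def using sL z z' sf_mult sf_inverse by blast
  have "f x = f z' * inverse (f z)" unfolding x_def using na_mult[OF f z'(1) sf_inverse[OF sL z(1)]] na_inverse[OF f sL z(1)] by simp
  moreover have "f z' * inverse (f z) > 1" using z z' fz by (simp add: field_simps)
  moreover have "g x = g z' * inverse (g z)" unfolding x_def using na_mult[OF g z'(1) sf_inverse[OF sL z(1)]] na_inverse[OF g sL z(1)] by simp
  moreover have "g z' * inverse (g z) < 1" using z z' gz by (simp add: field_simps)
  ultimately have "f x > 1 \<and> g x < 1" by simp
  then show ?thesis using xL by blast
qed



lemma exists_gt1: assumes sL: "subfield_C L" and f: "nonarch_abs L f" and ntf: "nontrivial_abs L f"
  shows "\<exists>y\<in>L. f y > 1"
proof -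
  obtain x0 where x0: "x0 \<in> L" "x0 \<noteq> 0" "f x0 \<noteq> 1" using ntf unfolding nontrivial_abs_def by auto
  have fx0: "f x0 > 0" using na_pos f x0 by blast
  show ?thesis
  proof (cases "f x0 > 1")
    case True then show ?thesis using x0 by blast
  next
    case False
    then have "f x0 < 1" using x0(3) by simp
    then have "f (inverse x0) > 1" using na_inverse[OF f sL x0(1)] fx0 by (simp add: one_less_inverse_iff)
    then show ?thesis using sf_inverse[OF sL x0(1)] by blast
  qed
qed

lemma val_frac: assumes sL: "subfield_C L" and h: "nonarch_abs L h" and x: "x \<in> L" and y: "y \<in> L"
  shows "h (x ^ r * y * inverse (1 + x ^ r)) = h x ^ r * h y * inverse (h (1 + x ^ r))"
proof -
  have a: "x ^ r \<in> L" using sf_power sL x by blast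
  have b: "1 + x ^ r \<in> L" using sf_add sf_1 sL a by blast
  have "h (x ^ r * y * inverse (1 + x ^ r)) = h (x ^ r * y) * h (inverse (1 + x ^ r))"
    using na_mult[OF h sf_mult[OF sL a y] sf_inverse[OF sL b]] .
  also have "\<dots> = h x ^ r * h y * inverse (h (1 + x ^ r))"
    using na_mult[OF h a y] na_inverse[OF h sL b] na_power[OF h sL x] by simp
  finally show ?thesis .
qed

lemma val_one_plus_big: assumes sL: "subfield_C L" and h: "nonarch_abs L h" and x: "x \<in> L"
  and hx: "h x > 1" and r: "r \<ge> 1"
  shows "h (1 + x ^ r) = h x ^ r"
proof -
  have a: "x ^ r \<in> L" using sf_power sL x by blast
  have "h x ^ r > 1" using hx r by (simp add: one_less_power)
  then have "h 1 < h (x ^ r)" using na_one[OF h sL] na_power[OF h sL x] by simp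
  then have "h (x ^ r + 1) = h (x ^ r)" using na_strict[OF h sL a sf_1[OF sL]] by blast
  then show ?thesis using na_power[OF h sL x] by (simp add: add.commute)
qed

lemma val_one_plus_small: assumes sL: "subfield_C L" and h: "nonarch_abs L h" and x: "x \<in> L"
  and hx: "h x < 1" and r: "r \<ge> 1"
  shows "h (1 + x ^ r) = 1"
proof -
  have a: "x ^ r \<in> L" using sf_power sL x by blast
  have "h x ^ r < 1" using hx r na_nonneg[OF h] by (simp add: power_less_one_iff)
  then have "h (x ^ r) < h 1" using na_one[OF h sL] na_power[OF h sL x] by simp
  then have "h (1 + x ^ r) = h 1" using na_strict[OF h sL sf_1[OF sL] a] by blast
  then show ?thesis using na_one[OF h sL] by simp
qed

lemma sepN:
  assumes sL: "subfield_C L" and f: "nonarch_abs L f" and ntf: "nontrivial_abs L f"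
    and G: "finite G" and hG: "\<forall>g\<in>G. nonarch_abs L g \<and> nontrivial_abs L g \<and> \<not> equiv_abs L f g"
  shows "\<exists>x\<in>L. f x > 1 \<and> (\<forall>g\<in>G. g x < 1)"
  using G hG
proof (induction G rule: finite_induct)
  case empty then show ?case using exists_gt1[OF sL f ntf] by auto
next
  case (insert h G)
  obtain x where x: "x \<in> L" "f x > 1" "\<forall>g\<in>G. g x < 1" using insert by auto
  have h: "nonarch_abs L h" "nontrivial_abs L h" "\<not> equiv_abs L f h" using insert.prems by auto
  obtain y where y: "y \<in> L" "f y > 1" "h y < 1" using sep2[OF sL f h(1) ntf h(2,3)] by blast
  have ev: "\<forall>g\<in>G. eventually (\<lambda>r. g x ^ r * g y < 1) sequentially"
  proof
    fix g assume g: "g \<in> G"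
    have ng: "nonarch_abs L g" using insert.prems g by auto
    have "g x < 1" "g x \<ge> 0" using x g na_nonneg[OF ng] by auto
    then have "(\<lambda>r. g x ^ r) \<longlonglongrightarrow> 0" by (intro LIMSEQ_power_zero) simp
    then have "(\<lambda>r. g x ^ r * g y) \<longlonglongrightarrow> 0 * g y" by (intro tendsto_mult) auto
    then show "eventually (\<lambda>r. g x ^ r * g y < 1) sequentially" by (intro order_tendstoD(2)) auto
  qed
  have "eventually (\<lambda>r. \<forall>g\<in>G. g x ^ r * g y < 1) sequentially"
    using eventually_ball_finite[OF insert.hyps(1) ev] .
  then have "eventually (\<lambda>r. r \<ge> 1 \<and> (\<forall>g\<in>G. g x ^ r * g y < 1)) sequentially"
    using eventually_conj[OF eventually_ge_at_top[of "1::nat"]] by blast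
  then obtain r where r: "r \<ge> 1" "\<forall>g\<in>G. g x ^ r * g y < 1" using eventually_sequentially by auto
  have nG: "\<And>g. g \<in> G \<Longrightarrow> nonarch_abs L g" using insert.prems by auto
  consider "h x < 1" | "h x = 1" | "h x > 1" by linarith
  then show ?case
  proof cases
    case 1 then show ?thesis using x by auto
  next
    case 2
    define z where "z = x ^ r * y"
    have zL: "z \<in> L" unfolding z_def using sL x y sf_mult sf_power by blast
    have val: "\<And>\<phi>. nonarch_abs L \<phi> \<Longrightarrow> \<phi> z = \<phi> x ^ r * \<phi> y"
    proof -
      fix \<phi> assume p: "nonarch_abs L \<phi>"
      show "\<phi> z = \<phi> x ^ r * \<phi> y"
        unfolding z_def using na_mult[OF p sf_power[OF sL x(1)] y(1)] na_power[OF p sL x(1)] by simp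
    qed
    have "f x ^ r \<ge> 1" using x by (simp add: one_le_power)
    then have "f x ^ r * f y \<ge> 1 * f y" using na_nonneg[OF f] by (intro mult_right_mono) auto
    then have "f z > 1" using val[OF f] y(2) by linarith
    moreover have "h z < 1" using val[OF h(1)] 2 y by simp
    moreover have "\<forall>g\<in>G. g z < 1" using val nG r by auto
    ultimately show ?thesis using zL by auto
  next
    case 3
    define z where "z = x ^ r * y * inverse (1 + x ^ r)"
    have a: "x ^ r \<in> L" using sf_power sL x by blast
    have b: "1 + x ^ r \<in> L" using sf_add sf_1 sL a by blast
    have zL: "z \<in> L" unfolding z_def using sf_mult[OF sL sf_mult[OF sL a y(1)] sf_inverse[OF sL b]] .
    have "f z = f x ^ r * f y * inverse (f x ^ r)"
      unfolding z_def using val_frac[OF sL f x(1) y(1)] val_one_plus_big[OF sL f x(1) x(2) r(1)] by simp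
    also have "\<dots> = f y" using x by simp
    finally have "f z > 1" using y by simp
    moreover have "h z < 1"
    proof -
      have "h z = h x ^ r * h y * inverse (h x ^ r)"
        unfolding z_def using val_frac[OF sL h(1) x(1) y(1)] val_one_plus_big[OF sL h(1) x(1) 3 r(1)] by simp
      also have "\<dots> = h y" using 3 by simp
      finally show ?thesis using y by simp
    qed
    moreover have "\<forall>g\<in>G. g z < 1"
    proof
      fix g assume g: "g \<in> G"
      have "g z = g x ^ r * g y * inverse 1"
        unfolding z_def using val_frac[OF sL nG[OF g] x(1) y(1)] val_one_plus_small[OF sL nG[OF g] x(1) _ r(1)] x(3) g by simp
      then show "g z < 1" using r g by simp
    qed
    ultimately show ?thesis using zL by auto
  qed
qed



interpretation QV: vector_space "\<lambda>(r::rat) (z::complex). of_rat r * z"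
  by unfold_locales (auto simp: algebra_simps of_rat_add of_rat_mult)

lemma na_powr: assumes g: "nonarch_abs L g" and t: "t > 0"
  shows "nonarch_abs L (\<lambda>x. g x powr t)"
  unfolding nonarch_abs_def
proof (intro conjI allI ballI impI)
  fix x assume "x \<notin> L" then show "g x powr t = 0" using na_out[OF g] by simp
next
  fix x assume "x \<in> L" then show "g x powr t \<ge> 0" by simp
next
  fix x assume x: "x \<in> L"
  show "(g x powr t = 0) = (x = 0)" using na_zero_iff[OF g x] by simp
next
  fix x y assume x: "x \<in> L" and y: "y \<in> L"
  show "g (x * y) powr t = g x powr t * g y powr t"
    using na_mult[OF g x y] na_nonneg[OF g] by (simp add: powr_mult)
  have "g (x + y) powr t \<le> (max (g x) (g y)) powr t"
    using na_add[OF g x y] na_nonneg[OF g] t by (intro powr_mono2) auto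
  also have "\<dots> = max (g x powr t) (g y powr t)"
    using na_nonneg[OF g, of x] na_nonneg[OF g, of y] t
  proof (cases "g x \<le> g y")
    case True
    then have "g x powr t \<le> g y powr t" using na_nonneg[OF g, of x] t by (intro powr_mono2) auto
    then show ?thesis using True by (simp add: max_absorb2)
  next
    case False
    then have "g y powr t \<le> g x powr t" using na_nonneg[OF g, of y] t by (intro powr_mono2) auto
    then show ?thesis using False by (simp add: max_absorb1)
  qed
  finally show "g (x + y) powr t \<le> max (g x powr t) (g y powr t)" .
qed

lemma normalize_rep:
  assumes sK: "subfield_C K" and KL: "K \<subseteq> L" and f0: "nonarch_abs K f0" and v: "v = cls K f0"
    and w: "w \<in> W L K v"
  shows "\<exists>h. h \<in> w \<and> (\<forall>x\<in>K. h x = f0 x)"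
proof -
  obtain g where g: "w \<in> nonarch_places L" "g \<in> w" "restrict_abs K g \<in> v" using w unfolding W_def by auto
  have ng: "nonarch_abs L g" using place_mem g by blast
  have "equiv_abs K f0 (restrict_abs K g)" using g(3) v unfolding cls_def by auto
  then obtain s where s: "s > 0" "\<forall>x\<in>K. restrict_abs K g x = f0 x powr s" unfolding equiv_abs_def by auto
  define h where "h = (\<lambda>x. g x powr (1/s))"
  have nh: "nonarch_abs L h" unfolding h_def using na_powr[OF ng] s by simp
  have "equiv_abs L g h" unfolding equiv_abs_def h_def using s by (intro exI[of _ "1/s"]) auto
  then have "h \<in> w" using place_closed[OF g(1) g(2) nh] by blast
  moreover have "\<forall>x\<in>K. h x = f0 x"
  proof
    fix x assume x: "x \<in> K"
    have "g x = f0 x powr s" using s x unfolding restrict_abs_def by auto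
    then show "h x = f0 x" unfolding h_def using s na_nonneg[OF f0, of x] by (simp add: powr_powr)
  qed
  ultimately show ?thesis by blast
qed

lemma card_bound:
  assumes sK: "subfield_C K" and KL: "K \<subseteq> L" and nfL: "number_field L"
    and v: "v \<in> nonarch_places K"
    and B: "finite B" "\<forall>x\<in>L. \<exists>q. (\<forall>b\<in>B. q b \<in> \<rat>) \<and> x = (\<Sum>b\<in>B. q b * b)"
    and P: "P \<subseteq> W L K v" "finite P"
  shows "card P \<le> card B"
proof -
  have sL: "subfield_C L" using nfL unfolding number_field_def by auto
  obtain f0 where f0: "nonarch_abs K f0" "nontrivial_abs K f0" "v = cls K f0" using v by (rule place_cls)
  define N where "N = (\<lambda>w. SOME h. h \<in> w \<and> (\<forall>x\<in>K. h x = f0 x))"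
  have N: "N w \<in> w \<and> (\<forall>x\<in>K. N w x = f0 x)" if "w \<in> P" for w
    unfolding N_def using someI_ex[OF normalize_rep[OF sK KL f0(1) f0(3)]] that P by blast
  have Pp: "w \<in> nonarch_places L" if "w \<in> P" for w using that P W_sub by blast
  have Nna: "nonarch_abs L (N w)" and Nnt: "nontrivial_abs L (N w)" if "w \<in> P" for w
    using N[OF that] Pp[OF that] place_mem place_nontriv by blast+
  have Nne: "\<not> equiv_abs L (N w1) (N w2)" if "w1 \<in> P" "w2 \<in> P" "w1 \<noteq> w2" for w1 w2
  proof
    assume e: "equiv_abs L (N w1) (N w2)"
    have "N w2 \<in> w1" using place_closed[OF Pp[OF that(1)] conjunct1[OF N[OF that(1)]] Nna[OF that(2)] e] .
    then show False using place_eq[OF Pp[OF that(1)] Pp[OF that(2)]] N[OF that(2)] that(3) by blast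
  qed
  define X where "X = (\<lambda>w. SOME x. x \<in> L \<and> N w x > 1 \<and> (\<forall>g\<in>N ` (P - {w}). g x < 1))"
  have X: "X w \<in> L \<and> N w (X w) > 1 \<and> (\<forall>g\<in>N ` (P - {w}). g (X w) < 1)" if w: "w \<in> P" for w
  proof -
    have hG: "\<forall>g\<in>N ` (P - {w}). nonarch_abs L g \<and> nontrivial_abs L g \<and> \<not> equiv_abs L (N w) g"
      using Nna Nnt Nne w by blast
    have "\<exists>x\<in>L. N w x > 1 \<and> (\<forall>g\<in>N ` (P - {w}). g x < 1)"
      using sepN[OF sL Nna[OF w] Nnt[OF w] _ hG] P(2) by blast
    then have "\<exists>x. x \<in> L \<and> N w x > 1 \<and> (\<forall>g\<in>N ` (P - {w}). g x < 1)" by blast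
    then show ?thesis unfolding X_def by (rule someI_ex)
  qed
  have injX: "inj_on X P"
  proof (rule inj_onI)
    fix w1 w2 assume w: "w1 \<in> P" "w2 \<in> P" "X w1 = X w2"
    show "w1 = w2"
    proof (rule ccontr)
      assume "w1 \<noteq> w2"
      then have "N w1 (X w2) < 1" using X[OF w(2)] w(1) by blast
      then show False using X[OF w(1)] w(3) by simp
    qed
  qed
  define S where "S = X ` P"
  have cardS: "card S = card P" unfolding S_def using card_image[OF injX] .
  have SL: "S \<subseteq> L" unfolding S_def using X by blast
  have indep: "\<forall>t\<in>T. u t = 0" if T: "T \<subseteq> S" "finite T" and sum0: "(\<Sum>t\<in>T. of_rat (u t) * t) = 0" for T u
  proof (rule ccontr)
    assume "\<not> (\<forall>t\<in>T. u t = 0)"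
    then obtain t1 where t1: "t1 \<in> T" "u t1 \<noteq> 0" by blast
    define \<phi> where "\<phi> = (\<lambda>t. f0 (of_rat (u t)))"
    define M where "M = Max (\<phi> ` T)"
    have "M \<in> \<phi> ` T" unfolding M_def using T t1 by (intro Max_in) auto
    then obtain t0 where t0: "t0 \<in> T" "\<phi> t0 = M" by auto
    have Mge: "\<phi> t \<le> M" if "t \<in> T" for t unfolding M_def using T that by (intro Max_ge) auto
    have "\<phi> t1 > 0" unfolding \<phi>_def using na_pos[OF f0(1) sf_of_rat[OF sK]] t1 by simp
    then have Mpos: "M > 0" using Mge[OF t1(1)] by linarith
    obtain w0 where w0: "w0 \<in> P" "t0 = X w0" using t0 T unfolding S_def by auto
    define h where "h = N w0"
    have nh: "nonarch_abs L h" unfolding h_def using Nna w0 by blast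
    have hK: "\<forall>x\<in>K. h x = f0 x" unfolding h_def using N w0 by blast
    have termv: "h (of_rat (u t) * t) = \<phi> t * h t" if "t \<in> T" for t
    proof -
      have qK: "of_rat (u t) \<in> K" using sf_of_rat[OF sK] .
      have tL: "t \<in> L" using SL T that by blast
      have "h (of_rat (u t) * t) = h (of_rat (u t)) * h t" using na_mult[OF nh _ tL] qK KL by blast
      then show ?thesis unfolding \<phi>_def using hK qK by simp
    qed
    have h0: "h t0 > 1" unfolding h_def using X[OF w0(1)] w0(2) by simp
    have big: "h (of_rat (u t0) * t0) > M" using termv[OF t0(1)] t0(2) h0 Mpos by simp
    have small: "h (\<Sum>t\<in>T - {t0}. of_rat (u t) * t) < M"
    proof (rule na_sum_less[OF nh sL _ Mpos])
      show "finite (T - {t0})" using T by simp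
    next
      fix t assume t: "t \<in> T - {t0}"
      have tL: "t \<in> L" using t T SL by blast
      show "of_rat (u t) * t \<in> L" by (rule sf_mult[OF sL sf_of_rat[OF sL] tL])
      obtain w where w: "w \<in> P" "t = X w" using t T unfolding S_def by auto
      have "w \<noteq> w0" using w w0 t by auto
      then have "h t < 1" unfolding h_def using X[OF w(1)] w0(1) w(2) by blast
      moreover have "h t \<ge> 0" using na_nonneg[OF nh] .
      moreover have "\<phi> t \<le> M" using Mge t by blast
      moreover have "\<phi> t \<ge> 0" unfolding \<phi>_def using na_nonneg[OF f0(1)] .
      ultimately have "\<phi> t * h t \<le> M * h t" by (intro mult_right_mono) auto
      also have "M * h t < M" using \<open>h t < 1\<close> Mpos by simp
      finally show "h (of_rat (u t) * t) < M" using termv t by simp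
    qed
    have "(\<Sum>t\<in>T. of_rat (u t) * t) = of_rat (u t0) * t0 + (\<Sum>t\<in>T - {t0}. of_rat (u t) * t)"
      using T(2) t0(1) by (simp add: sum.remove)
    moreover have "h (of_rat (u t0) * t0 + (\<Sum>t\<in>T - {t0}. of_rat (u t) * t)) = h (of_rat (u t0) * t0)"
    proof (rule na_strict[OF nh sL])
      have tL: "t0 \<in> L" using t0 T SL by blast
      show "of_rat (u t0) * t0 \<in> L" by (rule sf_mult[OF sL sf_of_rat[OF sL] tL])
      show "(\<Sum>t\<in>T - {t0}. of_rat (u t) * t) \<in> L"
      proof (rule sf_sum[OF sL])
        fix t assume "t \<in> T - {t0}"
        then have tL: "t \<in> L" using T SL by blast
        show "of_rat (u t) * t \<in> L" by (rule sf_mult[OF sL sf_of_rat[OF sL] tL])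
      qed
      show "h (\<Sum>t\<in>T - {t0}. of_rat (u t) * t) < h (of_rat (u t0) * t0)" using small big by linarith
    qed
    ultimately have "h 0 > M" using sum0 big by simp
    then show False using na_zero_iff[OF nh sf_0[OF sL]] Mpos by simp
  qed
  have "QV.independent S"
    unfolding QV.independent_explicit_finite_subsets
  proof (intro allI impI ballI)
    fix T u t assume a: "T \<subseteq> S" "finite T" "(\<Sum>v\<in>T. of_rat (u v) * v) = 0" "t \<in> T"
    show "u t = 0" using indep[OF a(1,2) a(3)] a(4) by blast
  qed
  moreover have "S \<subseteq> QV.span B"
  proof
    fix x assume "x \<in> S"
    then have "x \<in> L" using SL by blast
    then obtain q where q: "\<forall>b\<in>B. q b \<in> \<rat>" "x = (\<Sum>b\<in>B. q b * b)" using B by blast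
    have "q b * b \<in> QV.span B" if b: "b \<in> B" for b
    proof -
      obtain r where "q b = of_rat r" using q(1) b by (auto elim: Rats_cases)
      then show ?thesis using QV.span_scale[OF QV.span_base[OF b], of r] by simp
    qed
    then show "x \<in> QV.span B" unfolding q(2) by (rule QV.span_sum)
  qed
  ultimately have "card S \<le> card B" using QV.independent_span_bound[OF B(1)] by blast
  then show ?thesis using cardS by simp
qed

lemma W_finite:
  assumes sK: "subfield_C K" and KL: "K \<subseteq> L" and nfL: "number_field L"
    and v: "v \<in> nonarch_places K"
  shows "finite (W L K v)"
proof (rule ccontr)
  assume inf: "infinite (W L K v)"
  obtain B where B: "finite B" "\<forall>x\<in>L. \<exists>q. (\<forall>b\<in>B. q b \<in> \<rat>) \<and> x = (\<Sum>b\<in>B. q b * b)"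
    using nfL unfolding number_field_def by blast
  obtain P where P: "P \<subseteq> W L K v" "finite P" "card P = Suc (card B)"
    using infinite_arbitrarily_large[OF inf] by blast
  then show False using card_bound[OF sK KL nfL v B P(1,2)] by simp
qed



lemma nf_sf: "number_field L \<Longrightarrow> subfield_C L" unfolding number_field_def by auto

lemma sum_tower:
  assumes sK: "subfield_C K0" and nL: "number_field L" and nM: "number_field M"
    and KL: "K0 \<subseteq> L" and LM: "L \<subseteq> M" and v: "v \<in> nonarch_places K0"
  shows "(\<Sum>u\<in>W M K0 v. \<phi> u) = (\<Sum>w\<in>W L K0 v. \<Sum>u\<in>W M L w. \<phi> u)"
proof -
  have sL: "subfield_C L" using nf_sf nL by blast
  have eq: "W M K0 v = (\<Union>w\<in>W L K0 v. W M L w)"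
    using part_cover[OF sK sL KL LM v] part_sub[OF KL LM sK sL v] by blast
  have fin: "finite (W L K0 v)" using W_finite[OF sK KL nL v] .
  have fin2: "\<forall>w\<in>W L K0 v. finite (W M L w)"
    using W_finite[OF sL LM nM] W_sub by blast
  have disj: "\<forall>w1\<in>W L K0 v. \<forall>w2\<in>W L K0 v. w1 \<noteq> w2 \<longrightarrow> W M L w1 \<inter> W M L w2 = {}"
    using part_disj[OF LM sL] W_sub by blast
  show ?thesis unfolding eq using sum.UNION_disjoint[OF fin fin2 disj] by simp
qed

lemma exists_idx:
  assumes nf: "\<And>i. number_field (K i)" and mono: "\<And>i. K i \<subseteq> K (Suc i)"
    and union: "(\<Union>i. K i) = Qbar" and nL: "number_field L"
  shows "\<exists>i. L \<subseteq> K i"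
proof -
  obtain B where B: "finite B" "B \<subseteq> L" "\<forall>x\<in>L. \<exists>q. (\<forall>b\<in>B. q b \<in> \<rat>) \<and> x = (\<Sum>b\<in>B. q b * b)"
    using nL unfolding number_field_def by blast
  have "B \<subseteq> Qbar" using B nL unfolding number_field_def by blast
  have gen: "\<exists>i. B' \<subseteq> K i" if "finite B'" "B' \<subseteq> Qbar" for B'
    using that
  proof (induction B' rule: finite_induct)
    case empty then show ?case by simp
  next
    case (insert b B)
    obtain i1 where i1: "B \<subseteq> K i1" using insert by auto
    obtain i2 where i2: "b \<in> K i2" using insert.prems union by auto
    have "K i1 \<subseteq> K (max i1 i2)" "K i2 \<subseteq> K (max i1 i2)"
      using lift_Suc_mono_le[of K, OF mono] by auto
    then show ?case using i1 i2 by blast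
  qed
  obtain i where i: "B \<subseteq> K i" using gen[OF B(1) \<open>B \<subseteq> Qbar\<close>] by blast
  have sK: "subfield_C (K i)" using nf_sf nf by blast
  have "L \<subseteq> K i"
  proof
    fix x assume "x \<in> L"
    then obtain q where q: "\<forall>b\<in>B. q b \<in> \<rat>" "x = (\<Sum>b\<in>B. q b * b)" using B by blast
    show "x \<in> K i" unfolding q(2)
    proof (rule sf_sum[OF sK])
      fix b assume b: "b \<in> B"
      show "q b * b \<in> K i" using sf_mult[OF sK sf_Rats[OF sK] ] q(1) b i by blast
    qed
  qed
  then show ?thesis by blast
qed

theorem lemma4p2:
  fixes K :: "nat \<Rightarrow> complex set"
    and d :: "nat \<Rightarrow> (complex \<Rightarrow> real) set \<Rightarrow> rat"
  assumes nf: "\<And>i. number_field (K i)"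
    and mono: "\<And>i. K i \<subseteq> K (Suc i)"
    and union: "(\<Union>i. K i) = Qbar"
    and compat: "\<And>i v. v \<in> nonarch_places (K i) \<Longrightarrow>
                   d i v = (\<Sum>w\<in>W (K (Suc i)) (K i) v. d (Suc i) w)"
  shows "\<exists>c. consistent c \<and>
           (\<forall>i. \<forall>v\<in>nonarch_places (K i). c (K i) v = d i v) \<and>
           (\<forall>c'. consistent c' \<and> (\<forall>i. \<forall>v\<in>nonarch_places (K i). c' (K i) v = d i v)
                 \<longrightarrow> (\<forall>(L, w)\<in>J. c' L w = c L w))"
proof -
  have sK: "\<And>i. subfield_C (K i)" using nf nf_sf by blast
  have monole: "\<And>i j. i \<le> j \<Longrightarrow> K i \<subseteq> K j" using lift_Suc_mono_le[of K, OF mono] by blast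
  define e where "e = (\<lambda>i L w. \<Sum>u\<in>W (K i) L w. d i u)"
  have tower: "d i v = e j (K i) v" if ij: "i \<le> j" and v: "v \<in> nonarch_places (K i)" for i j v
    using ij
  proof (induction j rule: dec_induct)
    case base then show ?case unfolding e_def using W_self[OF v] by simp
  next
    case (step j)
    have "e (Suc j) (K i) v = (\<Sum>w\<in>W (K j) (K i) v. \<Sum>u\<in>W (K (Suc j)) (K j) w. d (Suc j) u)"
      unfolding e_def using sum_tower[OF sK nf nf monole[OF step.hyps(1)] mono v] .
    also have "\<dots> = (\<Sum>w\<in>W (K j) (K i) v. d j w)"
    proof (rule sum.cong)
      fix w assume "w \<in> W (K j) (K i) v"
      then have "w \<in> nonarch_places (K j)" using W_sub by blast
      then show "(\<Sum>u\<in>W (K (Suc j)) (K j) w. d (Suc j) u) = d j w" using compat by simp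
    qed simp
    finally show ?case using step.IH unfolding e_def by simp
  qed
  have indep: "e j L w = e i L w"
    if L: "number_field L" "L \<subseteq> K i" and ij: "i \<le> j" and w: "w \<in> nonarch_places L" for L i j w
  proof -
    have "e j L w = (\<Sum>u'\<in>W (K i) L w. \<Sum>u\<in>W (K j) (K i) u'. d j u)"
      unfolding e_def using sum_tower[OF nf_sf[OF L(1)] nf nf L(2) monole[OF ij] w] .
    also have "\<dots> = (\<Sum>u'\<in>W (K i) L w. d i u')"
      using tower[OF ij] W_sub[THEN subsetD] unfolding e_def by (intro sum.cong) auto
    finally show ?thesis unfolding e_def by simp
  qed
  have indep2: "e i L w = e j L w"
    if "number_field L" "L \<subseteq> K i" "L \<subseteq> K j" "w \<in> nonarch_places L" for L i j w
    using indep[OF that(1,2) _ that(4), of "max i j"] indep[OF that(1,3) _ that(4), of "max i j"] by simp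
  define c where "c = (\<lambda>L w. e (SOME i. L \<subseteq> K i) L w)"
  have c_eq: "c L w = e i L w" if "number_field L" "L \<subseteq> K i" "w \<in> nonarch_places L" for L i w
  proof -
    have "L \<subseteq> K (SOME i. L \<subseteq> K i)" using someI_ex[OF exists_idx[OF nf mono union that(1)]] .
    then show ?thesis unfolding c_def using indep2[OF that(1) _ that(2,3)] by blast
  qed
  have cons: "consistent c" unfolding consistent_def
  proof (intro allI impI)
    fix K0 L v assume a: "number_field K0" "number_field L" "K0 \<subseteq> L" "v \<in> nonarch_places K0"
    obtain i where i: "L \<subseteq> K i" using exists_idx[OF nf mono union a(2)] by blast
    have "(\<Sum>w\<in>W L K0 v. c L w) = (\<Sum>w\<in>W L K0 v. e i L w)"
      using c_eq[OF a(2) i] W_sub[THEN subsetD] by (intro sum.cong) auto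
    also have "\<dots> = e i K0 v"
      unfolding e_def using sum_tower[OF nf_sf[OF a(1)] a(2) nf a(3) i a(4), of "d i"] by simp
    also have "\<dots> = c K0 v" using c_eq[OF a(1) _ a(4), of i] a(3) i by auto
    finally show "c K0 v = (\<Sum>w\<in>W L K0 v. c L w)" by simp
  qed
  have agree: "\<forall>i. \<forall>v\<in>nonarch_places (K i). c (K i) v = d i v"
    using c_eq[OF nf order_refl] tower[OF order_refl] by simp
  have uniq: "\<forall>(L, w)\<in>J. c' L w = c L w"
    if c': "consistent c'" "\<forall>i. \<forall>v\<in>nonarch_places (K i). c' (K i) v = d i v" for c'
  proof (intro ballI, clarify)
    fix L w assume "(L, w) \<in> J"
    then have Lw: "number_field L" "w \<in> nonarch_places L" unfolding J_def by auto
    obtain i where i: "L \<subseteq> K i" using exists_idx[OF nf mono union Lw(1)] by blast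
    have "c' L w = (\<Sum>u\<in>W (K i) L w. c' (K i) u)"
      using c'(1) Lw nf i unfolding consistent_def by blast
    also have "\<dots> = e i L w" unfolding e_def using c'(2) W_sub[THEN subsetD] by (intro sum.cong) auto
    also have "\<dots> = c L w" using c_eq[OF Lw(1) i Lw(2)] by simp
    finally show "c' L w = c L w" .
  qed
  show ?thesis using cons agree uniq by blast
qed

end
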